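(* Assume there are finitely many ap-basic classes in $M_1$, namely $K_1,\dots,K_v$, all closed. (a) For every sufficiently small $\theta>0$ there is $\delta(\theta)\in(0,\theta)$ with the following property. Suppose there exist indices $i,i'\in\{1,\dots,v\}$ and an ap $\delta(\theta)$-pseudoorbit $(\xi_0,\dots,\xi_n)$ such that $d(\xi_0,K_i)<\delta(\theta)$, $d(\xi_n,K_{i'})<\delta(\theta)$, and $d(\xi_j,K_i)>\theta$ for some $j\in\{1,\dots,n\}$. Then $i\ne i'$ and $K_i<_{ap}K_{i'}$. (b) For every $\delta'>0$ there exist $\delta\in(0,\delta')$ and $n_0\ge1$ such that every ap $\delta$-pseudoorbit of length greater than $n_0$ passes through $N^{\delta'}(\mathcal{R}_{ap})$.
   Context: Let $M\subset\mathbb{R}^d$ be closed. Let $F:M\to M$ be continuous with $\sup_{x\in M}\|F(x)\|<\infty$. Let $d(x,y)=\max_i|x_i-y_i|$, $d(x,A)=\inf_{y\in A}d(x,y)$, and $N^\delta(A)=\{x\in M:\inf_{y\in A}\|x-y\|<\delta\}$. Suppose $M=M_0\cup M_1$ (disjoint) with $M_0$ closed, $F(M_0)\subseteq M_0$ and $F(M_1)\subseteq M_1$. ap-chain recurrence. For $\delta>0$, an ap $\delta$-pseudoorbit joining $x$ to $y$ is a tuple $(\xi_0,\dots,\xi_n)\in M^{n+1}$, $n\ge1$, with: - $\xi_0=x$ and $\xi_n=y$; - $\xi_i\in M_0\Rightarrow\xi_{i+1}\in M_0$; - $d(\xi_{i+1},F(\xi_i))<\delta$ for all $i$. Its length is $n$.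 Write $x<_{ap}y$ if for every $\delta>0$ such a pseudoorbit exists, and $x\sim_{ap}y$ if both directions hold. Let $\mathcal{R}_{ap}=\{x:x\sim_{ap}x\}$. The ap-basic classes are the equivalence classes of $\sim_{ap}$ on $\mathcal{R}_{ap}$. For classes, $K<_{ap}K'$ means $x<_{ap}y$ for $x\in K$, $y\in K'$. *)

theory Defs
  imports "HOL-Analysis.Analysis"
begin

definition dmax :: "real^'n \<Rightarrow> real^'n \<Rightarrow> real" where
  "dmax x y = Max (range (\<lambda>i. \<bar>x$i - y$i\<bar>))"

definition dset :: "real^'n \<Rightarrow> (real^'n) set \<Rightarrow> real" where
  "dset x A = Inf ((\<lambda>y. dmax x y) ` A)"

definition nbhd :: "(real^'n) set \<Rightarrow> real \<Rightarrow> (real^'n) set \<Rightarrow> (real^'n) set" where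
  "nbhd M \<delta> A = {x \<in> M. \<exists>y\<in>A. norm (x - y) < \<delta>}"

definition ap_pseudoorbit ::
  "(real^'n) set \<Rightarrow> (real^'n) set \<Rightarrow> (real^'n \<Rightarrow> real^'n) \<Rightarrow> real \<Rightarrow> (nat \<Rightarrow> real^'n) \<Rightarrow> nat \<Rightarrow> bool" where
  "ap_pseudoorbit M M0 F \<delta> \<xi> n \<longleftrightarrow> 1 \<le> n \<and> (\<forall>i\<le>n. \<xi> i \<in> M)
     \<and> (\<forall>i<n. \<xi> i \<in> M0 \<longrightarrow> \<xi> (Suc i) \<in> M0)
     \<and> (\<forall>i<n. dmax (\<xi> (Suc i)) (F (\<xi> i)) < \<delta>)"

definition ap_less ::
  "(real^'n) set \<Rightarrow> (real^'n) set \<Rightarrow> (real^'n \<Rightarrow> real^'n) \<Rightarrow> real^'n \<Rightarrow> real^'n \<Rightarrow> bool" where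
  "ap_less M M0 F x y \<longleftrightarrow> (\<forall>\<delta>>0. \<exists>\<xi> n. ap_pseudoorbit M M0 F \<delta> \<xi> n \<and> \<xi> 0 = x \<and> \<xi> n = y)"

definition ap_equiv ::
  "(real^'n) set \<Rightarrow> (real^'n) set \<Rightarrow> (real^'n \<Rightarrow> real^'n) \<Rightarrow> real^'n \<Rightarrow> real^'n \<Rightarrow> bool" where
  "ap_equiv M M0 F x y \<longleftrightarrow> ap_less M M0 F x y \<and> ap_less M M0 F y x"

definition R_ap :: "(real^'n) set \<Rightarrow> (real^'n) set \<Rightarrow> (real^'n \<Rightarrow> real^'n) \<Rightarrow> (real^'n) set" where
  "R_ap M M0 F = {x \<in> M. ap_equiv M M0 F x x}"

definition ap_basic_class ::
  "(real^'n) set \<Rightarrow> (real^'n) set \<Rightarrow> (real^'n \<Rightarrow> real^'n) \<Rightarrow> (real^'n) set \<Rightarrow> bool" where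
  "ap_basic_class M M0 F K \<longleftrightarrow>
     (\<exists>x\<in>R_ap M M0 F. K = {y \<in> R_ap M M0 F. ap_equiv M M0 F x y})"

definition class_less ::
  "(real^'n) set \<Rightarrow> (real^'n) set \<Rightarrow> (real^'n \<Rightarrow> real^'n) \<Rightarrow> (real^'n) set \<Rightarrow> (real^'n) set \<Rightarrow> bool" where
  "class_less M M0 F K K' \<longleftrightarrow> (\<forall>x\<in>K. \<forall>y\<in>K'. ap_less M M0 F x y)"

end

theory Submission
  imports Defs
begin


lemma dmax_ge: "\<bar>x$i - y$i\<bar> \<le> dmax x y"
  unfolding dmax_def by (rule Max_ge) auto

lemma dmax_le: "(\<And>i. \<bar>x$i - y$i\<bar> \<le> a) \<Longrightarrow> dmax x y \<le> a"
  unfolding dmax_def by (rule Max.boundedI) auto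

lemma dmax_nonneg: "0 \<le> dmax x y"
  by (rule order_trans[OF _ dmax_ge]) auto

lemma dmax_self: "dmax x x = 0"
  by (intro antisym dmax_le dmax_nonneg) auto

lemma dmax_sym: "dmax x y = dmax y x"
  by (intro antisym dmax_le) (auto simp: abs_minus_commute intro: order_trans[OF _ dmax_ge])

lemma dmax_triangle: "dmax x z \<le> dmax x y + dmax y z"
proof (rule dmax_le)
  fix i
  have "\<bar>x$i - z$i\<bar> \<le> \<bar>x$i - y$i\<bar> + \<bar>y$i - z$i\<bar>" by linarith
  also have "\<dots> \<le> dmax x y + dmax y z" by (intro add_mono dmax_ge)
  finally show "\<bar>x$i - z$i\<bar> \<le> dmax x y + dmax y z" .
qed

lemma dmax_le_norm: "dmax x y \<le> norm (x - y)"
  by (rule dmax_le) (metis component_le_norm_cart vector_minus_component)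

lemma norm_le_dmax: "norm (x - y) \<le> real CARD('n) * dmax x (y::real^'n)"
proof -
  have "norm (x - y) \<le> (\<Sum>i\<in>UNIV. \<bar>(x-y)$i\<bar>)" by (rule norm_le_l1_cart)
  also have "\<dots> \<le> (\<Sum>i\<in>(UNIV::'n set). dmax x y)"
    by (intro sum_mono) (simp add: dmax_ge)
  finally show ?thesis by simp
qed

lemma card_pos: "0 < real CARD('n::finite)" by simp




lemma dset_lower: "q \<in> K \<Longrightarrow> dset p K \<le> dmax p q"
  unfolding dset_def by (rule cInf_lower) (auto intro: bdd_belowI[where m=0] dmax_nonneg)

lemma dset_greatest: "K \<noteq> {} \<Longrightarrow> (\<And>q. q \<in> K \<Longrightarrow> a \<le> dmax p q) \<Longrightarrow> a \<le> dset p K"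
  unfolding dset_def by (rule cInf_greatest) auto

lemma dset_nonneg: "K \<noteq> {} \<Longrightarrow> 0 \<le> dset p K"
  by (rule dset_greatest) (auto simp: dmax_nonneg)

lemma dset_lessD: "K \<noteq> {} \<Longrightarrow> dset p K < a \<Longrightarrow> \<exists>q\<in>K. dmax p q < a"
  unfolding dset_def by (drule cInf_lessD[rotated]) auto

lemma dset_mem: "q \<in> K \<Longrightarrow> dset q K = 0"
  using dset_lower[of q K q] dset_nonneg[of K q] by (auto simp: dmax_self)

lemma dset_lip: "K \<noteq> {} \<Longrightarrow> dset p K \<le> dmax p p' + dset p' K"
proof -
  assume K: "K \<noteq> {}"
  have "dset p K - dmax p p' \<le> dset p' K"
  proof (rule dset_greatest[OF K])
    fix q assume "q \<in> K"
    have "dset p K \<le> dmax p q" by (rule dset_lower) fact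
    also have "\<dots> \<le> dmax p p' + dmax p' q" by (rule dmax_triangle)
    finally show "dset p K - dmax p p' \<le> dmax p' q" by simp
  qed
  then show ?thesis by simp
qed




lemma po_M0_prop:
  assumes "ap_pseudoorbit M M0 F \<delta> \<xi> n" "\<xi> i \<in> M0" "i \<le> j" "j \<le> n"
  shows "\<xi> j \<in> M0"
  using assms(3,4)
proof (induction j)
  case 0 then show ?case using assms(2) by simp
next
  case (Suc j)
  show ?case
  proof (cases "i = Suc j")
    case True then show ?thesis using assms(2) by simp
  next
    case False
    then have "\<xi> j \<in> M0" using Suc by simp
    then show ?thesis using assms(1) Suc.prems unfolding ap_pseudoorbit_def by auto
  qed
qed

lemma ap_less_trans:
  assumes "ap_less M M0 F x y" "ap_less M M0 F y z"
  shows "ap_less M M0 F x z"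
  unfolding ap_less_def
proof (intro allI impI)
  fix \<delta> :: real assume d: "\<delta> > 0"
  obtain \<xi>1 n1 where 1: "ap_pseudoorbit M M0 F \<delta> \<xi>1 n1" "\<xi>1 0 = x" "\<xi>1 n1 = y"
    using assms(1) d unfolding ap_less_def by blast
  obtain \<xi>2 n2 where 2: "ap_pseudoorbit M M0 F \<delta> \<xi>2 n2" "\<xi>2 0 = y" "\<xi>2 n2 = z"
    using assms(2) d unfolding ap_less_def by blast
  define \<eta> where "\<eta> i = (if i \<le> n1 then \<xi>1 i else \<xi>2 (i - n1))" for i
  have "ap_pseudoorbit M M0 F \<delta> \<eta> (n1 + n2)"
    unfolding ap_pseudoorbit_def
  proof (intro conjI allI impI)
    show "1 \<le> n1 + n2" using 1 unfolding ap_pseudoorbit_def by simp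
  next
    fix i assume "i \<le> n1 + n2"
    then show "\<eta> i \<in> M" using 1(1) 2(1) unfolding ap_pseudoorbit_def \<eta>_def by auto
  next
    fix i assume i: "i < n1 + n2" "\<eta> i \<in> M0"
    show "\<eta> (Suc i) \<in> M0"
    proof (cases "i < n1")
      case True then show ?thesis using i 1(1) unfolding ap_pseudoorbit_def \<eta>_def by auto
    next
      case False
      then have "\<xi>2 (i - n1) \<in> M0" "i - n1 < n2" using i unfolding \<eta>_def by (auto split: if_splits simp: 1 2)
      then have "\<xi>2 (Suc (i - n1)) \<in> M0" using 2(1) unfolding ap_pseudoorbit_def by auto
      moreover have "Suc i - n1 = Suc (i - n1)" using False by simp
      ultimately show ?thesis using False unfolding \<eta>_def by auto
    qed
  next
    fix i assume i: "i < n1 + n2"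
    show "dmax (\<eta> (Suc i)) (F (\<eta> i)) < \<delta>"
    proof (cases "i < n1")
      case True then show ?thesis using i 1(1) 2 unfolding ap_pseudoorbit_def \<eta>_def
        by (auto simp: 1)
    next
      case False
      then have "i - n1 < n2" using i by simp
      then have "dmax (\<xi>2 (Suc (i - n1))) (F (\<xi>2 (i - n1))) < \<delta>" using 2(1) unfolding ap_pseudoorbit_def by auto
      moreover have "Suc i - n1 = Suc (i - n1)" using False by simp
      moreover have "\<eta> i = \<xi>2 (i - n1)" using False 1 2 unfolding \<eta>_def by auto
      ultimately show ?thesis using False unfolding \<eta>_def by auto
    qed
  qed
  moreover have "\<eta> 0 = x" "\<eta> (n1 + n2) = z" using 1 2 unfolding \<eta>_def ap_pseudoorbit_def by auto
  ultimately show "\<exists>\<xi> n. ap_pseudoorbit M M0 F \<delta> \<xi> n \<and> \<xi> 0 = x \<and> \<xi> n = z" by blast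
qed

lemma orbit_po:
  assumes "x \<in> M" "F ` M \<subseteq> M" "F ` M0 \<subseteq> M0" "\<delta> > 0" "1 \<le> n"
  shows "ap_pseudoorbit M M0 F \<delta> (\<lambda>i. (F ^^ i) x) n"
proof -
  have "(F ^^ i) x \<in> M" for i by (induction i) (use assms in auto)
  then show ?thesis using assms unfolding ap_pseudoorbit_def by (auto simp: dmax_self)
qed




lemma limit_chain:
  assumes cont: "continuous_on M F"
    and po: "\<And>k. ap_pseudoorbit M M0 F (\<delta> k) (\<xi> k) (n k)"
    and dl: "\<delta> \<longlonglongrightarrow> 0"
    and ab: "\<And>k. a k < b k" "\<And>k. b k \<le> n k"
    and xl: "(\<lambda>k. \<xi> k (a k)) \<longlonglongrightarrow> x" and yl: "(\<lambda>k. \<xi> k (b k)) \<longlonglongrightarrow> y"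
    and xM: "x \<in> M" and yM: "y \<in> M"
    and c1: "\<And>k. x \<in> M0 \<Longrightarrow> \<xi> k (a k) \<in> M0"
    and c2: "\<And>k. \<xi> k (b k) \<in> M0 \<Longrightarrow> y \<in> M0"
  shows "ap_less M M0 F x y"
  unfolding ap_less_def
proof (intro allI impI)
  fix \<epsilon> :: real assume ep: "\<epsilon> > 0"
  define e where "e = \<epsilon> / 3"
  have e: "e > 0" using ep by (simp add: e_def)
  obtain \<eta> where eta: "\<eta> > 0" "\<And>p. p \<in> M \<Longrightarrow> dist p x < \<eta> \<Longrightarrow> dist (F p) (F x) < e"
    using cont xM e unfolding continuous_on_iff by metis
  obtain N1 where N1: "\<And>k. k \<ge> N1 \<Longrightarrow> norm (\<delta> k - 0) < e" using LIMSEQ_D[OF dl e] by blast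
  obtain N2 where N2: "\<And>k. k \<ge> N2 \<Longrightarrow> norm (\<xi> k (a k) - x) < \<eta>" using LIMSEQ_D[OF xl eta(1)] by blast
  obtain N3 where N3: "\<And>k. k \<ge> N3 \<Longrightarrow> norm (\<xi> k (b k) - y) < e" using LIMSEQ_D[OF yl e] by blast
  define k where "k = max N1 (max N2 N3)"
  define A where "A = a k"
  define B where "B = b k"
  define L where "L = B - A"
  define \<zeta> where "\<zeta> = \<xi> k"
  have AB: "A < B" "B \<le> n k" using ab unfolding A_def B_def by auto
  have dk: "\<delta> k < e" using N1[of k] unfolding k_def by auto
  have pk: "ap_pseudoorbit M M0 F (\<delta> k) \<zeta> (n k)" using po unfolding \<zeta>_def by simp
  have step: "dmax (\<zeta> (Suc i)) (F (\<zeta> i)) < e" if "i < n k" for i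
    using pk that dk unfolding ap_pseudoorbit_def by force
  have inM: "\<zeta> i \<in> M" if "i \<le> n k" for i using pk that unfolding ap_pseudoorbit_def by blast
  have d2: "dmax (F (\<zeta> A)) (F x) < e"
  proof -
    have "\<zeta> A \<in> M" using inM AB by simp
    moreover have "dist (\<zeta> A) x < \<eta>" using N2[of k] unfolding k_def \<zeta>_def A_def by (simp add: dist_norm)
    ultimately have "dist (F (\<zeta> A)) (F x) < e" by (rule eta(2))
    then show ?thesis using dmax_le_norm[of "F (\<zeta> A)" "F x"] by (simp add: dist_norm)
  qed
  have d1: "dmax y (\<zeta> B) < e"
  proof -
    have "norm (\<zeta> B - y) < e" using N3[of k] unfolding k_def \<zeta>_def B_def by auto
    then show ?thesis using dmax_le_norm[of "\<zeta> B" y] dmax_sym[of y "\<zeta> B"] by linarith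
  qed
  define \<omega> where "\<omega> t = (if t = 0 then x else if t = L then y else \<zeta> (A + t))" for t
  have L1: "1 \<le> L" using AB unfolding L_def by simp
  have prp: "\<zeta> j \<in> M0" if "\<zeta> i \<in> M0" "i \<le> j" "j \<le> n k" for i j
    using po_M0_prop[OF pk that] .
  have "ap_pseudoorbit M M0 F \<epsilon> \<omega> L"
    unfolding ap_pseudoorbit_def
  proof (intro conjI allI impI)
    show "1 \<le> L" by fact
  next
    fix t assume "t \<le> L"
    then show "\<omega> t \<in> M" unfolding \<omega>_def using xM yM inM AB L_def by auto
  next
    fix t assume t: "t < L" "\<omega> t \<in> M0"
    have zA: "\<zeta> (A + t) \<in> M0"
    proof (cases "t = 0")
      case True
      then have "x \<in> M0" using t unfolding \<omega>_def by simp
      then show ?thesis using c1 True unfolding \<zeta>_def A_def by simp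
    next
      case False then show ?thesis using t unfolding \<omega>_def by simp
    qed
    have zS: "\<zeta> (A + Suc t) \<in> M0" using prp[OF zA] t AB L_def by simp
    show "\<omega> (Suc t) \<in> M0"
    proof (cases "Suc t = L")
      case True
      then have "A + Suc t = B" using AB L_def by simp
      then have "\<zeta> B \<in> M0" using zS by simp
      then have "y \<in> M0" using c2 unfolding \<zeta>_def B_def by simp
      then show ?thesis using True unfolding \<omega>_def by simp
    next
      case False then show ?thesis using zS unfolding \<omega>_def by simp
    qed
  next
    fix t assume t: "t < L"
    have s: "dmax (\<zeta> (A + Suc t)) (F (\<zeta> (A + t))) < e"
      using step[of "A + t"] t AB L_def by simp
    show "dmax (\<omega> (Suc t)) (F (\<omega> t)) < \<epsilon>"
    proof (cases "t = 0")
      case True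
      show ?thesis
      proof (cases "L = 1")
        case L: True
        then have "A + Suc t = B" using AB L_def True by simp
        then have "dmax y (F x) \<le> dmax y (\<zeta> (A + Suc t)) + (dmax (\<zeta> (A + Suc t)) (F (\<zeta> A)) + dmax (F (\<zeta> A)) (F x))"
          by (metis add_le_cancel_left dmax_triangle order_trans)
        also have "\<dots> < e + (e + e)" using d1 d2 s True \<open>A + Suc t = B\<close> by (intro add_strict_mono) auto
        finally show ?thesis unfolding \<omega>_def using True L e_def by auto
      next
        case L: False
        have "dmax (\<zeta> (A + Suc t)) (F x) \<le> dmax (\<zeta> (A + Suc t)) (F (\<zeta> A)) + dmax (F (\<zeta> A)) (F x)"
          by (rule dmax_triangle)
        also have "\<dots> < e + e" using d2 s True by simp
        finally show ?thesis unfolding \<omega>_def using True L e_def ep by auto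
      qed
    next
      case False
      show ?thesis
      proof (cases "Suc t = L")
        case True
        then have "A + Suc t = B" using AB L_def by simp
        have "dmax y (F (\<zeta> (A + t))) \<le> dmax y (\<zeta> (A + Suc t)) + dmax (\<zeta> (A + Suc t)) (F (\<zeta> (A + t)))"
          by (rule dmax_triangle)
        also have "\<dots> < e + e" using d1 s \<open>A + Suc t = B\<close> by simp
        finally show ?thesis unfolding \<omega>_def using True False t e_def ep by auto
      next
        case F2: False
        then show ?thesis unfolding \<omega>_def using False t s e_def ep by auto
      qed
    qed
  qed
  moreover have "\<omega> 0 = x" "\<omega> L = y" using L1 unfolding \<omega>_def by auto
  ultimately show "\<exists>\<xi> n. ap_pseudoorbit M M0 F \<epsilon> \<xi> n \<and> \<xi> 0 = x \<and> \<xi> n = y" by blast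
qed




lemma ap_less_bound:
  assumes "ap_less M M0 F x p" "\<And>q. q \<in> M \<Longrightarrow> norm (F q) \<le> B"
  shows "norm p \<le> B"
proof (rule field_le_epsilon)
  fix e :: real assume e: "e > 0"
  define c where "c = real CARD('a)"
  have c: "c > 0" unfolding c_def by simp
  obtain \<xi> n where po: "ap_pseudoorbit M M0 F (e / c) \<xi> n" "\<xi> n = p"
    using assms(1) e c unfolding ap_less_def by (meson divide_pos_pos)
  obtain m where m: "n = Suc m" using po unfolding ap_pseudoorbit_def by (cases n) auto
  have "dmax p (F (\<xi> m)) < e / c" "\<xi> m \<in> M" using po m unfolding ap_pseudoorbit_def by auto
  then have "norm (p - F (\<xi> m)) < e" "norm (F (\<xi> m)) \<le> B"
    using norm_le_dmax[of p "F (\<xi> m)"] c assms(2) unfolding c_def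
    by (auto simp: field_simps)
  then show "norm p \<le> B + e" using norm_triangle_ineq2[of p "F (\<xi> m)"] by linarith
qed

lemma R_bound:
  assumes "p \<in> R_ap M M0 F" "\<And>q. q \<in> M \<Longrightarrow> norm (F q) \<le> B"
  shows "norm p \<le> B"
  using assms ap_less_bound unfolding R_ap_def ap_equiv_def by blast

lemma part_b:
  fixes M M0 :: "(real^'n) set" and F :: "real^'n \<Rightarrow> real^'n"
  assumes "closed M" "F ` M \<subseteq> M" "continuous_on M F" "bounded (F ` M)"
    "closed M0" "F ` M0 \<subseteq> M0"
  shows "\<forall>\<delta>'>0. \<exists>\<delta> n0. 0 < \<delta> \<and> \<delta> < \<delta>' \<and> 1 \<le> n0 \<and>
            (\<forall>\<xi> n. ap_pseudoorbit M M0 F \<delta> \<xi> n \<and> n > n0 \<longrightarrow>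
               (\<exists>j\<le>n. \<xi> j \<in> nbhd M \<delta>' (R_ap M M0 F)))"
proof (intro allI impI)
  fix \<delta>' :: real assume d': "\<delta>' > 0"
  show "\<exists>\<delta> n0. 0 < \<delta> \<and> \<delta> < \<delta>' \<and> 1 \<le> n0 \<and>
            (\<forall>\<xi> n. ap_pseudoorbit M M0 F \<delta> \<xi> n \<and> n > n0 \<longrightarrow>
               (\<exists>j\<le>n. \<xi> j \<in> nbhd M \<delta>' (R_ap M M0 F)))"
  proof (rule ccontr)
    assume H: "\<not> ?thesis"
    define R where "R = R_ap M M0 F"
    define dl where "dl k = \<delta>' / (real k + 2)" for k :: nat
    have dlpos: "0 < dl k" "dl k < \<delta>'" for k
    proof -
      show "0 < dl k" using d' unfolding dl_def by simp
      have "\<delta>' / (real k + 2) < \<delta>' / 1" using d' by (intro divide_strict_left_mono) auto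
      then show "dl k < \<delta>'" unfolding dl_def by simp
    qed
    have "\<forall>k. \<exists>p. ap_pseudoorbit M M0 F (dl k) (fst p) (snd p) \<and> snd p > 2 * k + 2 \<and>
                 (\<forall>j\<le>snd p. fst p j \<notin> nbhd M \<delta>' R)"
    proof
      fix k
      have "\<not> (\<forall>\<xi> n. ap_pseudoorbit M M0 F (dl k) \<xi> n \<and> n > 2 * k + 2 \<longrightarrow>
               (\<exists>j\<le>n. \<xi> j \<in> nbhd M \<delta>' R))" unfolding R_def
      proof
        assume A: "\<forall>\<xi> n. ap_pseudoorbit M M0 F (dl k) \<xi> n \<and> n > 2 * k + 2 \<longrightarrow>
               (\<exists>j\<le>n. \<xi> j \<in> nbhd M \<delta>' (R_ap M M0 F))"
        have "1 \<le> 2 * k + 2" by simp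
        with A dlpos[of k] have "\<exists>\<delta> n0. 0 < \<delta> \<and> \<delta> < \<delta>' \<and> 1 \<le> n0 \<and>
            (\<forall>\<xi> n. ap_pseudoorbit M M0 F \<delta> \<xi> n \<and> n > n0 \<longrightarrow>
               (\<exists>j\<le>n. \<xi> j \<in> nbhd M \<delta>' (R_ap M M0 F)))"
          by (intro exI[of _ "dl k"] exI[of _ "2 * k + 2"]) simp
        with H show False by blast
      qed
      then obtain \<xi>0 n0 where "ap_pseudoorbit M M0 F (dl k) \<xi>0 n0" "n0 > 2 * k + 2"
           "\<forall>j\<le>n0. \<xi>0 j \<notin> nbhd M \<delta>' R" by blast
      then show "\<exists>p. ap_pseudoorbit M M0 F (dl k) (fst p) (snd p) \<and> snd p > 2 * k + 2 \<and>
                 (\<forall>j\<le>snd p. fst p j \<notin> nbhd M \<delta>' R)" by (intro exI[of _ "(\<xi>0, n0)"]) simp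
    qed
    from choice[OF this] obtain P where P0: "\<forall>k. ap_pseudoorbit M M0 F (dl k) (fst (P k)) (snd (P k)) \<and> snd (P k) > 2 * k + 2 \<and>
                 (\<forall>j\<le>snd (P k). fst (P k) j \<notin> nbhd M \<delta>' R)" by blast
    have P: "\<And>k. ap_pseudoorbit M M0 F (dl k) (fst (P k)) (snd (P k))"
       "\<And>k. snd (P k) > 2 * k + 2" "\<And>k j. j \<le> snd (P k) \<Longrightarrow> fst (P k) j \<notin> nbhd M \<delta>' R"
      using P0 by auto
    define \<xi> where "\<xi> k = fst (P k)" for k
    define n where "n k = snd (P k)" for k
    have po: "\<And>k. ap_pseudoorbit M M0 F (dl k) (\<xi> k) (n k)"
      and nk: "\<And>k. n k > 2 * k + 2"
      and nn: "\<And>k j. j \<le> n k \<Longrightarrow> \<xi> k j \<notin> nbhd M \<delta>' R"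
      using P unfolding \<xi>_def n_def by auto
    define c where "c = real CARD('n)"
    have c: "c > 0" unfolding c_def by simp
    obtain B where B: "\<And>q. q \<in> M \<Longrightarrow> norm (F q) \<le> B"
      using assms(4) unfolding bounded_pos by auto
    define S where "S = {p \<in> M. norm p \<le> B + c * \<delta>' \<and> (\<forall>y\<in>R. \<delta>' \<le> norm (p - y))}"
    have S_eq: "S = M \<inter> cball 0 (B + c * \<delta>') \<inter> (\<Inter>y\<in>R. - ball y \<delta>')"
      unfolding S_def by (auto simp: dist_norm norm_minus_commute not_less)
    have "closed S" unfolding S_eq using assms(1) by (intro closed_Int closed_INT closed_Compl) auto
    moreover have "bounded S" unfolding S_eq by (meson Int_lower2 bounded_cball bounded_subset inf_le1 order_trans)
    ultimately have cS: "compact S" by (simp add: compact_eq_bounded_closed)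
    have inS: "\<xi> k j \<in> S" if jj: "1 \<le> j" "j \<le> n k" for k j
    proof -
      obtain i where i: "j = Suc i" using jj by (cases j) auto
      have "\<xi> k j \<in> M" "\<xi> k i \<in> M" "dmax (\<xi> k j) (F (\<xi> k i)) < dl k"
        using po[of k] jj i unfolding ap_pseudoorbit_def by auto
      moreover have "norm (\<xi> k j - F (\<xi> k i)) \<le> c * dmax (\<xi> k j) (F (\<xi> k i))"
        using norm_le_dmax[of "\<xi> k j" "F (\<xi> k i)"] unfolding c_def .
      moreover have "c * dmax (\<xi> k j) (F (\<xi> k i)) \<le> c * dl k"
        using c \<open>dmax (\<xi> k j) (F (\<xi> k i)) < dl k\<close> by (intro mult_left_mono) auto
      ultimately have "norm (\<xi> k j - F (\<xi> k i)) \<le> c * dl k" "norm (F (\<xi> k i)) \<le> B"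
        using B by auto
      moreover have "c * dl k \<le> c * \<delta>'" using c dlpos[of k] by simp
      ultimately have "norm (\<xi> k j) \<le> B + c * \<delta>'" using norm_triangle_ineq2[of "\<xi> k j" "F (\<xi> k i)"] by linarith
      moreover have "\<forall>y\<in>R. \<delta>' \<le> norm (\<xi> k j - y)" using nn[OF jj(2)] \<open>\<xi> k j \<in> M\<close> unfolding nbhd_def by auto
      ultimately show ?thesis unfolding S_def using \<open>\<xi> k j \<in> M\<close> by auto
    qed
    define \<Omega> where "\<Omega> = {x. \<forall>\<epsilon>>0. \<forall>N. \<exists>k\<ge>N. \<exists>j. N \<le> j \<and> j + N \<le> n k \<and> norm (\<xi> k j - x) < \<epsilon>}"
    have OS: "x \<in> S" if xO: "x \<in> \<Omega>" for x
    proof -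
      have "\<forall>\<epsilon>>0. \<exists>y\<in>S. dist y x < \<epsilon>"
      proof (intro allI impI)
        fix \<epsilon> :: real assume "\<epsilon> > 0"
        then obtain k j where "1 \<le> j" "j + 1 \<le> n k" "norm (\<xi> k j - x) < \<epsilon>"
          using xO unfolding \<Omega>_def by blast
        then show "\<exists>y\<in>S. dist y x < \<epsilon>" using inS[of j k] by (auto simp: dist_norm)
      qed
      then show ?thesis using closed_approachable[OF \<open>closed S\<close>] by blast
    qed
    have OF: "F x \<in> \<Omega>" if xO: "x \<in> \<Omega>" for x
      unfolding \<Omega>_def mem_Collect_eq
    proof (intro allI impI)
      fix \<epsilon> :: real and N :: nat assume ep: "\<epsilon> > 0"
      have xM: "x \<in> M" using OS[OF xO] unfolding S_def by auto
      obtain \<eta> where eta: "\<eta> > 0" "\<And>p. p \<in> M \<Longrightarrow> dist p x < \<eta> \<Longrightarrow> dist (F p) (F x) < \<epsilon> / 2"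
      proof -
        have "\<epsilon> / 2 > 0" using ep by simp
        then show ?thesis using that assms(3) xM unfolding continuous_on_iff by metis
      qed
      define N' where "N' = N + 1 + nat \<lceil>2 * c * \<delta>' / \<epsilon>\<rceil>"
      obtain k j where kj: "k \<ge> N'" "N' \<le> j" "j + N' \<le> n k" "norm (\<xi> k j - x) < \<eta>"
        using xO eta(1) unfolding \<Omega>_def by blast
      have jn: "j < n k" using kj unfolding N'_def by simp
      have "dmax (\<xi> k (Suc j)) (F (\<xi> k j)) < dl k" "\<xi> k j \<in> M"
        using po[of k] jn unfolding ap_pseudoorbit_def by auto
      then have "c * dmax (\<xi> k (Suc j)) (F (\<xi> k j)) < c * dl k" using c by simp
      then have a1: "norm (\<xi> k (Suc j) - F (\<xi> k j)) < c * dl k"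
        using norm_le_dmax[of "\<xi> k (Suc j)" "F (\<xi> k j)"] unfolding c_def by linarith
      have "2 * c * \<delta>' / \<epsilon> \<le> real k + 2"
      proof -
        have "2 * c * \<delta>' / \<epsilon> \<le> real (nat \<lceil>2 * c * \<delta>' / \<epsilon>\<rceil>)" by linarith
        also have "\<dots> \<le> real k"
        proof -
          have "nat \<lceil>2 * c * \<delta>' / \<epsilon>\<rceil> \<le> k" using kj(1) unfolding N'_def by linarith
          then show ?thesis by linarith
        qed
        finally show ?thesis by simp
      qed
      then have "2 * c * \<delta>' \<le> \<epsilon> * (real k + 2)" using ep by (simp add: field_simps)
      then have "c * dl k \<le> \<epsilon> / 2" unfolding dl_def by (simp add: field_simps)
      moreover have nF: "norm (F (\<xi> k j) - F x) < \<epsilon> / 2"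
        using eta(2)[OF \<open>\<xi> k j \<in> M\<close>] kj(4) by (simp add: dist_norm)
      ultimately have "norm (\<xi> k (Suc j) - F x) < \<epsilon>"
      proof -
        have "\<xi> k (Suc j) - F x = (\<xi> k (Suc j) - F (\<xi> k j)) + (F (\<xi> k j) - F x)" by simp
        then have "norm (\<xi> k (Suc j) - F x) \<le> norm (\<xi> k (Suc j) - F (\<xi> k j)) + norm (F (\<xi> k j) - F x)"
          by (metis norm_triangle_ineq)
        then show ?thesis using a1 \<open>c * dl k \<le> \<epsilon> / 2\<close> \<open>norm (F (\<xi> k j) - F x) < \<epsilon> / 2\<close> by linarith
      qed
      moreover have "k \<ge> N" "N \<le> Suc j" "Suc j + N \<le> n k" using kj unfolding N'_def by auto
      ultimately show "\<exists>k\<ge>N. \<exists>j. N \<le> j \<and> j + N \<le> n k \<and> norm (\<xi> k j - F x) < \<epsilon>" by blast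
    qed
    define m where "m k = n k div 2" for k
    have mk: "k + 1 \<le> m k" "m k + m k \<le> n k" "1 \<le> m k" for k using nk[of k] unfolding m_def by auto
    obtain w0 r where w0: "w0 \<in> S" "strict_mono r" "((\<lambda>k. \<xi> k (m k)) \<circ> r) \<longlonglongrightarrow> w0"
    proof -
      have "\<forall>k. \<xi> k (m k) \<in> S" using inS mk by (meson add_leE)
      from seq_compactE[OF compact_imp_seq_compact[OF cS] this] show ?thesis using that by blast
    qed
    have "w0 \<in> \<Omega>"
      unfolding \<Omega>_def mem_Collect_eq
    proof (intro allI impI)
      fix \<epsilon> :: real and N :: nat assume "\<epsilon> > 0"
      then obtain N1 where N1: "\<And>i. i \<ge> N1 \<Longrightarrow> norm (((\<lambda>k. \<xi> k (m k)) \<circ> r) i - w0) < \<epsilon>"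
        using LIMSEQ_D[OF w0(3)] by blast
      define i where "i = max N N1"
      have "r i \<ge> N" using seq_suble[OF w0(2), of i] unfolding i_def by simp
      moreover have "N \<le> m (r i)" "m (r i) + N \<le> n (r i)" using mk[of "r i"] \<open>r i \<ge> N\<close> by auto
      moreover have "norm (\<xi> (r i) (m (r i)) - w0) < \<epsilon>" using N1[of i] unfolding i_def by simp
      ultimately show "\<exists>k\<ge>N. \<exists>j. N \<le> j \<and> j + N \<le> n k \<and> norm (\<xi> k j - w0) < \<epsilon>" by blast
    qed
    then obtain x0 where x0: "x0 \<in> \<Omega>" "(\<Omega> \<inter> M0 \<noteq> {}) \<longrightarrow> x0 \<in> M0" by blast
    define orb where "orb i = (F ^^ i) x0" for i
    have oO: "orb i \<in> \<Omega>" for i unfolding orb_def by (induction i) (use x0 OF in auto)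
    have x0M: "x0 \<in> M" using OS[OF x0(1)] unfolding S_def by auto
    obtain w r where w: "w \<in> S" "strict_mono r" "(orb \<circ> r) \<longlonglongrightarrow> w"
    proof -
      have "\<forall>k. orb k \<in> S" using oO OS by blast
      from seq_compactE[OF compact_imp_seq_compact[OF cS] this] show ?thesis using that by blast
    qed
    have wM: "w \<in> M" using w unfolding S_def by auto
    have wO: "w \<in> \<Omega>"
      unfolding \<Omega>_def mem_Collect_eq
    proof (intro allI impI)
      fix \<epsilon> :: real and N :: nat assume ep: "\<epsilon> > 0"
      then obtain N1 where N1: "\<And>i. i \<ge> N1 \<Longrightarrow> norm ((orb \<circ> r) i - w) < \<epsilon> / 2"
        using LIMSEQ_D[OF w(3), of "\<epsilon>/2"] by auto
      have "orb (r N1) \<in> \<Omega>" by (rule oO)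
      then have AA: "\<forall>e>0. \<forall>N. \<exists>k\<ge>N. \<exists>j. N \<le> j \<and> j + N \<le> n k \<and> norm (\<xi> k j - orb (r N1)) < e"
        unfolding \<Omega>_def by simp
      have "\<epsilon> / 2 > 0" using ep by simp
      with AA have "\<exists>k\<ge>N. \<exists>j. N \<le> j \<and> j + N \<le> n k \<and> norm (\<xi> k j - orb (r N1)) < \<epsilon> / 2" by blast
      then obtain k j where kj: "k \<ge> N" "N \<le> j" "j + N \<le> n k" "norm (\<xi> k j - orb (r N1)) < \<epsilon> / 2"
        by blast
      have "norm (\<xi> k j - w) < \<epsilon>"
        using kj(4) N1[of N1] norm_triangle_ineq[of "\<xi> k j - orb (r N1)" "orb (r N1) - w"] by simp
      then show "\<exists>k\<ge>N. \<exists>j. N \<le> j \<and> j + N \<le> n k \<and> norm (\<xi> k j - w) < \<epsilon>" using kj by blast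
    qed
    have lim1: "(\<lambda>k. orb (r k)) \<longlonglongrightarrow> w" using w(3) by (simp add: comp_def)
    have lim2: "(\<lambda>k. orb (r (Suc k))) \<longlonglongrightarrow> w" using LIMSEQ_Suc[OF lim1] .
    have oM0: "orb i \<in> M0" if "x0 \<in> M0" for i
      unfolding orb_def by (induction i) (use that assms(6) in auto)
    have "ap_less M M0 F w w"
    proof (rule limit_chain[where \<xi>="\<lambda>k. orb" and n="\<lambda>k. r (Suc k)" and \<delta>="\<lambda>k. inverse (real (Suc k))"
          and a=r and b="\<lambda>k. r (Suc k)"])
      show "continuous_on M F" by fact
      show "ap_pseudoorbit M M0 F (inverse (real (Suc k))) orb (r (Suc k))" for k
        unfolding orb_def
      proof (rule orbit_po[OF x0M assms(2) assms(6)])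
        show "1 \<le> r (Suc k)" using seq_suble[OF w(2), of "Suc k"] by simp
      qed simp
      show "(\<lambda>k. inverse (real (Suc k))) \<longlonglongrightarrow> 0" by (rule LIMSEQ_inverse_real_of_nat)
      show "r k < r (Suc k)" for k using w(2) by (simp add: strict_mono_Suc_iff)
      show "r (Suc k) \<le> r (Suc k)" for k by simp
      show "(\<lambda>k. orb (r k)) \<longlonglongrightarrow> w" by fact
      show "(\<lambda>k. orb (r (Suc k))) \<longlonglongrightarrow> w" by fact
      show "w \<in> M" by fact
      show "w \<in> M" by fact
      show "orb (r k) \<in> M0" if "w \<in> M0" for k
      proof -
        have "orb (r k) \<in> \<Omega>" by (rule oO)
        have "x0 \<in> M0"
        proof (rule ccontr)
          assume "x0 \<notin> M0"
          then have "\<Omega> \<inter> M0 = {}" using x0 by blast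
          moreover have "w \<in> \<Omega>" by (rule wO)
          ultimately show False using that by blast
        qed
        then show ?thesis by (rule oM0)
      qed
      show "w \<in> M0" if "orb (r (Suc k)) \<in> M0" for k
      proof -
        have "x0 \<in> M0" using that oO[of "r (Suc k)"] x0(2) by blast
        then have "\<forall>k. orb (r k) \<in> M0" using oM0 by blast
        then show ?thesis using closed_sequentially[OF assms(5), of "\<lambda>k. orb (r k)"] lim1 by blast
      qed
    qed
    then have "w \<in> R" unfolding R_def R_ap_def ap_equiv_def using wM by auto
    then show False using w(1) d' unfolding S_def by auto
  qed
qed




lemma approx_lim:
  fixes a b :: "nat \<Rightarrow> 'a::real_normed_vector"
  assumes "b \<longlonglongrightarrow> l" "e \<longlonglongrightarrow> 0" "\<And>i. norm (a i - b i) \<le> e i"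
  shows "a \<longlonglongrightarrow> l"
proof -
  have "(\<lambda>i. a i - b i) \<longlonglongrightarrow> 0"
    by (rule Lim_null_comparison[OF _ assms(2)]) (use assms(3) in auto)
  from tendsto_add[OF assms(1) this] show ?thesis by simp
qed

lemma class_props:
  assumes "ap_basic_class M M0 F K"
  shows "K \<noteq> {}" "K \<subseteq> R_ap M M0 F" "K \<subseteq> M"
    "\<And>x y. x \<in> K \<Longrightarrow> y \<in> K \<Longrightarrow> ap_less M M0 F x y"
    "\<And>x y. x \<in> K \<Longrightarrow> y \<in> M \<Longrightarrow> ap_less M M0 F x y \<Longrightarrow> ap_less M M0 F y x \<Longrightarrow> y \<in> K"
proof -
  obtain r where r: "r \<in> R_ap M M0 F" "K = {y \<in> R_ap M M0 F. ap_equiv M M0 F r y}"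
    using assms unfolding ap_basic_class_def by blast
  have "ap_equiv M M0 F r r" using r(1) unfolding R_ap_def by auto
  then show "K \<noteq> {}" using r by auto
  show "K \<subseteq> R_ap M M0 F" using r by auto
  then show "K \<subseteq> M" unfolding R_ap_def by auto
  show "ap_less M M0 F x y" if "x \<in> K" "y \<in> K" for x y
    using that r ap_less_trans unfolding ap_equiv_def by blast
  show "y \<in> K" if "x \<in> K" "y \<in> M" "ap_less M M0 F x y" "ap_less M M0 F y x" for x y
  proof -
    have rx: "ap_less M M0 F r x" "ap_less M M0 F x r" using that(1) r unfolding ap_equiv_def by auto
    have "ap_less M M0 F y y" using ap_less_trans[OF that(4) that(3)] .
    then have "y \<in> R_ap M M0 F" using that(2) unfolding R_ap_def ap_equiv_def by auto
    moreover have "ap_equiv M M0 F r y" unfolding ap_equiv_def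
      using ap_less_trans[OF rx(1) that(3)] ap_less_trans[OF that(4) rx(2)] by auto
    ultimately show ?thesis using r by auto
  qed
qed




lemma po_bound:
  fixes \<xi> :: "nat \<Rightarrow> real^'n"
  assumes "ap_pseudoorbit M M0 F \<delta> \<xi> n" "1 \<le> j" "j \<le> n" "\<And>q. q \<in> M \<Longrightarrow> norm (F q) \<le> B"
  shows "norm (\<xi> j) \<le> B + real CARD('n) * \<delta>" and "\<xi> j \<in> M"
proof -
  obtain i where i: "j = Suc i" using assms(2) by (cases j) auto
  have a: "\<xi> j \<in> M" "\<xi> i \<in> M" "dmax (\<xi> j) (F (\<xi> i)) < \<delta>"
    using assms(1,3) i unfolding ap_pseudoorbit_def by auto
  then show "\<xi> j \<in> M" by simp
  have "norm (\<xi> j - F (\<xi> i)) \<le> real CARD('n) * dmax (\<xi> j) (F (\<xi> i))" by (rule norm_le_dmax)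
  also have "\<dots> \<le> real CARD('n) * \<delta>" using a(3) by (intro mult_left_mono) auto
  finally show "norm (\<xi> j) \<le> B + real CARD('n) * \<delta>"
    using norm_triangle_ineq2[of "\<xi> j" "F (\<xi> i)"] assms(4)[OF a(2)] by linarith
qed

lemma po_notM0:
  assumes "ap_pseudoorbit M M0 F \<delta> \<xi> n" "\<xi> n \<notin> M0" "j \<le> n"
  shows "\<xi> j \<notin> M0"
  using po_M0_prop[OF assms(1) _ assms(3) order_refl] assms(2) by blast

lemma part_a:
  fixes M M0 M1 :: "(real^'n) set" and F :: "real^'n \<Rightarrow> real^'n"
  assumes "closed M"
    and "F ` M \<subseteq> M"
    and "continuous_on M F"
    and "bounded (F ` M)"
    and "M = M0 \<union> M1" and "M0 \<inter> M1 = {}"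
    and "closed M0"
    and "F ` M1 \<subseteq> M1"
    and "finite {K. ap_basic_class M M0 F K \<and> K \<subseteq> M1}"
    and "\<forall>K. ap_basic_class M M0 F K \<and> K \<subseteq> M1 \<longrightarrow> closed K"
  shows "\<exists>\<theta>0>0. \<forall>\<theta>. 0 < \<theta> \<and> \<theta> < \<theta>0 \<longrightarrow>
            (\<exists>\<delta>. 0 < \<delta> \<and> \<delta> < \<theta> \<and>
              (\<forall>K K' \<xi> n.
                 ap_basic_class M M0 F K \<and> K \<subseteq> M1 \<and>
                 ap_basic_class M M0 F K' \<and> K' \<subseteq> M1 \<and>
                 ap_pseudoorbit M M0 F \<delta> \<xi> n \<and>
                 dset (\<xi> 0) K < \<delta> \<and> dset (\<xi> n) K' < \<delta> \<and>
                 (\<exists>j\<in>{1..n}. dset (\<xi> j) K > \<theta>)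
                 \<longrightarrow> K \<noteq> K' \<and> class_less M M0 F K K'))"
proof -
  define KK where "KK = {K. ap_basic_class M M0 F K \<and> K \<subseteq> M1}"
  have fKK: "finite KK" using assms(9) unfolding KK_def .
  obtain B where B: "B > 0" "\<And>q. q \<in> M \<Longrightarrow> norm (F q) \<le> B"
    using assms(4) unfolding bounded_pos by auto
  define c where "c = real CARD('n)"
  have c: "c > 0" unfolding c_def by simp
  have KKprops: "K \<noteq> {}" "K \<subseteq> R_ap M M0 F" "K \<subseteq> M" "K \<subseteq> M1" "closed K" "ap_basic_class M M0 F K"
    if KK: "K \<in> KK" for K
  proof -
    have cK: "ap_basic_class M M0 F K" "K \<subseteq> M1" using KK unfolding KK_def by auto
    show "K \<noteq> {}" "K \<subseteq> R_ap M M0 F" "K \<subseteq> M" using class_props(1-3)[OF cK(1)] by auto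
    show "K \<subseteq> M1" "ap_basic_class M M0 F K" using cK by auto
    show "closed K" using assms(10) cK by blast
  qed
  have Kbd: "norm q \<le> B" if "K \<in> KK" "q \<in> K" for K q
    using R_bound[of q M M0 F B] B(2) KKprops(2)[OF that(1)] that(2) by auto
  have Kc: "compact K" if "K \<in> KK" for K
  proof -
    have "K \<subseteq> cball 0 B" using Kbd[OF that] by auto
    then have "bounded K" using bounded_cball bounded_subset by blast
    then show ?thesis using KKprops(5)[OF that] by (simp add: compact_eq_bounded_closed)
  qed
  have "\<forall>K\<in>KK. \<exists>e>0. \<forall>p\<in>M0. \<forall>q\<in>K. e \<le> dmax p q"
  proof
    fix K assume K: "K \<in> KK"
    have "K \<inter> M0 = {}" using KKprops(4)[OF K] assms(6) by auto
    then obtain d where d: "d > 0" "\<forall>x\<in>K. \<forall>y\<in>M0. d \<le> dist x y"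
      using separate_compact_closed[OF Kc[OF K] assms(7)] by blast
    have "d / c \<le> dmax p q" if "p \<in> M0" "q \<in> K" for p q
    proof -
      have "d \<le> norm (q - p)" using d(2) that by (auto simp: dist_norm)
      also have "\<dots> \<le> c * dmax q p" unfolding c_def by (rule norm_le_dmax)
      finally have "d \<le> c * dmax p q" by (simp add: dmax_sym[of q p])
      then show ?thesis using c by (simp add: divide_le_eq mult.commute)
    qed
    then show "\<exists>e>0. \<forall>p\<in>M0. \<forall>q\<in>K. e \<le> dmax p q" using d c by (intro exI[of _ "d / c"]) auto
  qed
  from bchoice[OF this] obtain e where e0: "\<forall>K\<in>KK. e K > 0 \<and> (\<forall>p\<in>M0. \<forall>q\<in>K. e K \<le> dmax p q)"
    by blast
  have e: "\<And>K. K \<in> KK \<Longrightarrow> e K > 0" "\<And>K p q. K \<in> KK \<Longrightarrow> p \<in> M0 \<Longrightarrow> q \<in> K \<Longrightarrow> e K \<le> dmax p q"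
    using e0 by auto
  define \<theta>0 where "\<theta>0 = Min (insert 1 (e ` KK))"
  have fin: "finite (insert 1 (e ` KK))" using fKK by simp
  have t0: "\<theta>0 > 0" unfolding \<theta>0_def using fin e(1) by (subst Min_gr_iff) auto
  have t1: "\<theta>0 \<le> 1" unfolding \<theta>0_def using fin by (intro Min_le) auto
  have t2: "\<theta>0 \<le> e K" if "K \<in> KK" for K unfolding \<theta>0_def using fin that by (intro Min_le) auto
  have sep: "\<theta>0 \<le> dset p K" if "K \<in> KK" "p \<in> M0" for K p
  proof (rule dset_greatest[OF KKprops(1)[OF that(1)]])
    fix q assume "q \<in> K"
    then show "\<theta>0 \<le> dmax p q" using t2[OF that(1)] e(2)[OF that(1,2)] by fastforce
  qed
  show ?thesis
  proof (rule exI[of _ \<theta>0], intro conjI allI impI)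
    show "\<theta>0 > 0" by fact
    fix \<theta> :: real assume th: "0 < \<theta> \<and> \<theta> < \<theta>0"
    define bad where "bad \<delta> K K' \<xi> n \<longleftrightarrow> (ap_basic_class M M0 F K \<and> K \<subseteq> M1 \<and>
                 ap_basic_class M M0 F K' \<and> K' \<subseteq> M1 \<and>
                 ap_pseudoorbit M M0 F \<delta> \<xi> n \<and>
                 dset (\<xi> 0) K < \<delta> \<and> dset (\<xi> n) K' < \<delta> \<and>
                 (\<exists>j\<in>{1..n}. dset (\<xi> j) K > \<theta>)) \<and> \<not> (K \<noteq> K' \<and> class_less M M0 F K K')"
      for \<delta> K K' and \<xi> :: "nat \<Rightarrow> real^'n" and n
    show "\<exists>\<delta>. 0 < \<delta> \<and> \<delta> < \<theta> \<and>
              (\<forall>K K' \<xi> n.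
                 ap_basic_class M M0 F K \<and> K \<subseteq> M1 \<and>
                 ap_basic_class M M0 F K' \<and> K' \<subseteq> M1 \<and>
                 ap_pseudoorbit M M0 F \<delta> \<xi> n \<and>
                 dset (\<xi> 0) K < \<delta> \<and> dset (\<xi> n) K' < \<delta> \<and>
                 (\<exists>j\<in>{1..n}. dset (\<xi> j) K > \<theta>)
                 \<longrightarrow> K \<noteq> K' \<and> class_less M M0 F K K')" (is "\<exists>\<delta>. ?P \<delta>")
    proof (rule ccontr)
      assume H: "\<not> ?thesis"
      define dl where "dl k = \<theta> / 2 * inverse (real (Suc k))" for k
      have dl: "0 < dl k" "dl k < \<theta>" for k
      proof -
        show "0 < dl k" using th unfolding dl_def by simp
        have "inverse (real (Suc k)) \<le> 1" using le_imp_inverse_le[of 1 "real (Suc k)"] by simp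
        then have "dl k \<le> \<theta> / 2" unfolding dl_def using th by (simp add: mult_left_le)
        then show "dl k < \<theta>" using th by simp
      qed
      have dlim: "dl \<longlonglongrightarrow> 0"
        unfolding dl_def using tendsto_mult[OF tendsto_const[of "\<theta>/2"] LIMSEQ_inverse_real_of_nat] by simp
      have "\<forall>k. \<exists>K K' \<xi> n. bad (dl k) K K' \<xi> n"
      proof
        fix k
        have "\<not> ?P (dl k)"
        proof
          assume "?P (dl k)"
          then have "\<exists>\<delta>. ?P \<delta>" by (rule exI)
          with H show False by (rule notE)
        qed
        then show "\<exists>K K' \<xi> n. bad (dl k) K K' \<xi> n" using dl[of k] unfolding bad_def by blast
      qed
      then have "\<forall>k. \<exists>p. bad (dl k) (fst p) (fst (snd p)) (fst (snd (snd p))) (snd (snd (snd p)))"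
        by simp
      from choice[OF this] obtain P where P: "\<forall>k. bad (dl k) (fst (P k)) (fst (snd (P k))) (fst (snd (snd (P k)))) (snd (snd (snd (P k))))"
        by blast
      define Ks where "Ks k = fst (P k)" for k
      define Ks' where "Ks' k = fst (snd (P k))" for k
      define \<xi> where "\<xi> k = fst (snd (snd (P k)))" for k
      define n where "n k = snd (snd (snd (P k)))" for k
      have bk: "bad (dl k) (Ks k) (Ks' k) (\<xi> k) (n k)" for k
        using P unfolding Ks_def Ks'_def \<xi>_def n_def by simp
      have KsKK: "Ks k \<in> KK" "Ks' k \<in> KK" for k using bk[of k] unfolding bad_def KK_def by auto
      have po: "ap_pseudoorbit M M0 F (dl k) (\<xi> k) (n k)" for k using bk[of k] unfolding bad_def by auto
      have d0: "dset (\<xi> k 0) (Ks k) < dl k" for k using bk[of k] unfolding bad_def by auto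
      have dn: "dset (\<xi> k (n k)) (Ks' k) < dl k" for k using bk[of k] unfolding bad_def by auto
      have far: "\<exists>j. 1 \<le> j \<and> j \<le> n k \<and> \<theta> < dset (\<xi> k j) (Ks k)" for k
        using bk[of k] unfolding bad_def by auto
      have notgood: "\<not> (Ks k \<noteq> Ks' k \<and> class_less M M0 F (Ks k) (Ks' k))" for k
        using bk[of k] unfolding bad_def by auto
      have n1: "1 \<le> n k" for k using po[of k] unfolding ap_pseudoorbit_def by simp
      have xiM: "\<xi> k j \<in> M" if "j \<le> n k" for k j using po[of k] that unfolding ap_pseudoorbit_def by auto
      have nM0: "\<xi> k j \<notin> M0" if "j \<le> n k" for k j
      proof -
        have "\<xi> k (n k) \<notin> M0"
        proof
          assume "\<xi> k (n k) \<in> M0"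
          then have "\<theta>0 \<le> dset (\<xi> k (n k)) (Ks' k)" using sep KsKK by blast
          then show False using dn[of k] dl[of k] th by linarith
        qed
        then show ?thesis using po_notM0[OF po[of k] _ that] by blast
      qed
      define g where "g k = (Ks k, Ks' k)" for k
      have "g ` UNIV \<subseteq> KK \<times> KK" using KsKK unfolding g_def by auto
      then have "finite (g ` UNIV)" using fKK by (meson finite_SigmaI finite_subset)
      then obtain a0 where "infinite {a \<in> UNIV. g a = g a0}"
        using pigeonhole_infinite[of "UNIV :: nat set" g] by auto
      then obtain s :: "nat \<Rightarrow> nat" where s: "strict_mono s" "\<And>i. s i \<in> {a \<in> UNIV. g a = g a0}"
        using infinite_enumerate by blast
      define K where "K = Ks a0"
      define K' where "K' = Ks' a0"
      have sK: "Ks (s i) = K" "Ks' (s i) = K'" for i using s(2)[of i] unfolding g_def K_def K'_def by auto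
      have KKK: "K \<in> KK" "K' \<in> KK" using KsKK unfolding K_def K'_def by auto
      have ng: "\<not> (K \<noteq> K' \<and> class_less M M0 F K K')" using notgood[of "s 0"] sK by simp
      define X where "X k = (SOME q. q \<in> Ks k \<and> dmax (\<xi> k 0) q < dl k)" for k
      define X' where "X' k = (SOME q. q \<in> Ks' k \<and> dmax (\<xi> k (n k)) q < dl k)" for k
      have X: "X k \<in> Ks k" "dmax (\<xi> k 0) (X k) < dl k" for k
      proof -
        have "\<exists>q\<in>Ks k. dmax (\<xi> k 0) q < dl k" using dset_lessD[OF KKprops(1)[OF KsKK(1)] d0] .
        then have "X k \<in> Ks k \<and> dmax (\<xi> k 0) (X k) < dl k" unfolding X_def by (rule someI2_bex) auto
        then show "X k \<in> Ks k" "dmax (\<xi> k 0) (X k) < dl k" by auto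
      qed
      have X': "X' k \<in> Ks' k" "dmax (\<xi> k (n k)) (X' k) < dl k" for k
      proof -
        have "\<exists>q\<in>Ks' k. dmax (\<xi> k (n k)) q < dl k" using dset_lessD[OF KKprops(1)[OF KsKK(2)] dn] .
        then have "X' k \<in> Ks' k \<and> dmax (\<xi> k (n k)) (X' k) < dl k" unfolding X'_def by (rule someI2_bex) auto
        then show "X' k \<in> Ks' k" "dmax (\<xi> k (n k)) (X' k) < dl k" by auto
      qed
      define J where "J k = (LEAST j. 1 \<le> j \<and> j \<le> n k \<and> \<theta> < dset (\<xi> k j) (Ks k))" for k
      have J: "1 \<le> J k" "J k \<le> n k" "\<theta> < dset (\<xi> k (J k)) (Ks k)" for k
        using LeastI_ex[OF far[of k]] unfolding J_def by auto
      have Jmin: "\<not> \<theta> < dset (\<xi> k j) (Ks k)" if "1 \<le> j" "j < J k" for k j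
        using not_less_Least[of j "\<lambda>j. 1 \<le> j \<and> j \<le> n k \<and> \<theta> < dset (\<xi> k j) (Ks k)"] that J(2)[of k]
        unfolding J_def by auto
      define Z where "Z k = \<xi> k (J k - 1)" for k
      have Zth: "dset (Z k) (Ks k) \<le> \<theta>" for k
      proof (cases "J k - 1 = 0")
        case True then show ?thesis using d0[of k] dl[of k] unfolding Z_def by simp
      next
        case False
        then have "1 \<le> J k - 1" "J k - 1 < J k" by auto
        then have "\<not> \<theta> < dset (\<xi> k (J k - 1)) (Ks k)" by (rule Jmin)
        then show ?thesis unfolding Z_def by simp
      qed
      define C where "C = M \<inter> cball 0 (B + c)"
      have cC: "compact C" unfolding C_def
        using assms(1) by (simp add: compact_eq_bounded_closed closed_Int bounded_Int)
      have ZC: "Z k \<in> C" for k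
      proof (cases "J k - 1 = 0")
        case True
        have "norm (X k) \<le> B" using Kbd[OF KsKK(1) X(1)] .
        moreover have "norm (\<xi> k 0 - X k) \<le> c * dl k"
        proof -
          have "norm (\<xi> k 0 - X k) \<le> c * dmax (\<xi> k 0) (X k)" unfolding c_def by (rule norm_le_dmax)
          also have "\<dots> \<le> c * dl k" using X(2)[of k] c by (intro mult_left_mono) auto
          finally show ?thesis .
        qed
        moreover have "c * dl k \<le> c" using dl[of k] th t1 c by (simp add: mult_left_le)
        ultimately have "norm (\<xi> k 0) \<le> B + c" using norm_triangle_ineq2[of "\<xi> k 0" "X k"] by linarith
        then show ?thesis using True xiM[of 0 k] unfolding Z_def C_def by auto
      next
        case False
        have "norm (\<xi> k (J k - 1)) \<le> B + c * dl k" "\<xi> k (J k - 1) \<in> M"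
          using po_bound[OF po[of k], where j="J k - 1" and B=B] False J[of k] B(2) unfolding c_def by auto
        moreover have "c * dl k \<le> c" using dl[of k] th t1 c by (simp add: mult_left_le)
        ultimately show ?thesis unfolding Z_def C_def by auto
      qed
      have inT: "\<forall>i. (X (s i), X' (s i), Z (s i)) \<in> K \<times> K' \<times> C"
      proof
        fix i
        have "X (s i) \<in> K" using X(1)[of "s i"] sK(1)[of i] by simp
        moreover have "X' (s i) \<in> K'" using X'(1)[of "s i"] sK(2)[of i] by simp
        ultimately show "(X (s i), X' (s i), Z (s i)) \<in> K \<times> K' \<times> C" using ZC[of "s i"] by simp
      qed
      have cT: "compact (K \<times> K' \<times> C)" using Kc KKK cC by (intro compact_Times) auto
      from seq_compactE[OF compact_imp_seq_compact[OF cT] inT]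
      obtain l r where lr: "l \<in> K \<times> K' \<times> C" "strict_mono r"
        "((\<lambda>i. (X (s i), X' (s i), Z (s i))) \<circ> r) \<longlonglongrightarrow> l" .

      define t where "t = s \<circ> r"
      have t: "strict_mono t" unfolding t_def using s(1) lr(2) by (simp add: strict_mono_o)
      obtain x0 x0' z where l: "l = (x0, x0', z)" by (cases l) auto
      have x0: "x0 \<in> K" "x0' \<in> K'" "z \<in> C" using lr(1) l by auto
      have lims: "(\<lambda>i. X (t i)) \<longlonglongrightarrow> x0" "(\<lambda>i. X' (t i)) \<longlonglongrightarrow> x0'" "(\<lambda>i. Z (t i)) \<longlonglongrightarrow> z"
        using tendsto_fst[OF lr(3)] tendsto_snd[OF lr(3)] tendsto_fst[OF tendsto_snd[OF lr(3)]]
          tendsto_snd[OF tendsto_snd[OF lr(3)]]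
        unfolding l t_def by (auto simp: comp_def)
      have tK: "Ks (t i) = K" "Ks' (t i) = K'" for i unfolding t_def using sK by auto
      have Dlim: "(\<lambda>i. dl (t i)) \<longlonglongrightarrow> 0" using LIMSEQ_subseq_LIMSEQ[OF dlim t] by (simp add: comp_def)
      have cDlim: "(\<lambda>i. c * dl (t i)) \<longlonglongrightarrow> 0" using tendsto_mult[OF tendsto_const[of c] Dlim] by simp
      have lim0: "(\<lambda>i. \<xi> (t i) 0) \<longlonglongrightarrow> x0"
      proof (rule approx_lim[OF lims(1) cDlim])
        fix i
        have "norm (\<xi> (t i) 0 - X (t i)) \<le> c * dmax (\<xi> (t i) 0) (X (t i))" unfolding c_def by (rule norm_le_dmax)
        also have "\<dots> \<le> c * dl (t i)" using X(2)[of "t i"] c by (intro mult_left_mono) auto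
        finally show "norm (\<xi> (t i) 0 - X (t i)) \<le> c * dl (t i)" .
      qed
      have limn: "(\<lambda>i. \<xi> (t i) (n (t i))) \<longlonglongrightarrow> x0'"
      proof (rule approx_lim[OF lims(2) cDlim])
        fix i
        have "norm (\<xi> (t i) (n (t i)) - X' (t i)) \<le> c * dmax (\<xi> (t i) (n (t i))) (X' (t i))" unfolding c_def by (rule norm_le_dmax)
        also have "\<dots> \<le> c * dl (t i)" using X'(2)[of "t i"] c by (intro mult_left_mono) auto
        finally show "norm (\<xi> (t i) (n (t i)) - X' (t i)) \<le> c * dl (t i)" .
      qed
      have x0M: "x0 \<in> M" "x0' \<in> M" using x0 KKprops(3) KKK by auto
      have x0M0: "x0 \<notin> M0" "x0' \<notin> M0" using x0 KKprops(4) KKK assms(6) by auto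
      have A: "ap_less M M0 F x0 x0'"
      proof (rule limit_chain[where \<xi>="\<lambda>i. \<xi> (t i)" and n="\<lambda>i. n (t i)" and \<delta>="\<lambda>i. dl (t i)"
            and a="\<lambda>i. 0" and b="\<lambda>i. n (t i)"])
        show "continuous_on M F" by fact
        show "ap_pseudoorbit M M0 F (dl (t k)) (\<xi> (t k)) (n (t k))" for k by (rule po)
        show "(\<lambda>i. dl (t i)) \<longlonglongrightarrow> 0" by (rule Dlim)
        show "0 < n (t k)" for k using n1[of "t k"] by simp
        show "n (t k) \<le> n (t k)" for k by simp
        show "(\<lambda>i. \<xi> (t i) 0) \<longlonglongrightarrow> x0" by (rule lim0)
        show "(\<lambda>i. \<xi> (t i) (n (t i))) \<longlonglongrightarrow> x0'" by (rule limn)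
        show "x0 \<in> M" "x0' \<in> M" using x0M by auto
        show "\<xi> (t k) 0 \<in> M0" if "x0 \<in> M0" for k using that x0M0 by simp
        show "x0' \<in> M0" if "\<xi> (t k) (n (t k)) \<in> M0" for k using that nM0[of "n (t k)" "t k"] by simp
      qed
      have cl: "class_less M M0 F K K'"
        unfolding class_less_def
      proof (intro ballI)
        fix x y assume "x \<in> K" "y \<in> K'"
        have "ap_less M M0 F x x0" using class_props(4)[OF KKprops(6)[OF KKK(1)] \<open>x \<in> K\<close> x0(1)] .
        moreover have "ap_less M M0 F x0' y" using class_props(4)[OF KKprops(6)[OF KKK(2)] x0(2) \<open>y \<in> K'\<close>] .
        ultimately show "ap_less M M0 F x y" using A ap_less_trans by blast
      qed
      have "K \<noteq> K'"
      proof
        assume KK': "K = K'"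
        have zM: "z \<in> M" using x0(3) unfolding C_def by auto
        have zth: "dset z K \<le> \<theta>"
        proof (rule field_le_epsilon)
          fix \<epsilon> :: real assume "\<epsilon> > 0"
          then obtain N where N: "\<And>i. i \<ge> N \<Longrightarrow> norm (Z (t i) - z) < \<epsilon>" using LIMSEQ_D[OF lims(3)] by blast
          have "dset z K \<le> dmax z (Z (t N)) + dset (Z (t N)) K" by (rule dset_lip[OF KKprops(1)[OF KKK(1)]])
          moreover have "dmax z (Z (t N)) < \<epsilon>"
            using N[of N] dmax_le_norm[of "Z (t N)" z] dmax_sym[of z "Z (t N)"] by auto
          moreover have "dset (Z (t N)) K \<le> \<theta>" using Zth[of "t N"] tK by simp
          ultimately show "dset z K \<le> \<theta> + \<epsilon>" by linarith
        qed
        have zM0: "z \<notin> M0" using sep[OF KKK(1)] zth th by fastforce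
        have zM1: "z \<in> M1" using zM zM0 assms(5) by auto
        define y where "y = F z"
        have yM1: "y \<in> M1" using zM1 assms(8) unfolding y_def by auto
        have yM: "y \<in> M" "y \<notin> M0" using yM1 assms(5,6) by auto
        have ZM: "Z k \<in> M" for k using ZC unfolding C_def by auto
        have FZ: "(\<lambda>i. F (Z (t i))) \<longlonglongrightarrow> y"
          using assms(3) zM ZM lims(3) unfolding continuous_on_sequentially y_def comp_def by auto
        have limJ: "(\<lambda>i. \<xi> (t i) (J (t i))) \<longlonglongrightarrow> y"
        proof (rule approx_lim[OF FZ cDlim])
          fix i
          have JJ: "Suc (J (t i) - 1) = J (t i)" using J(1)[of "t i"] by simp
          have "dmax (\<xi> (t i) (J (t i))) (F (Z (t i))) < dl (t i)"
          proof -
            have "J (t i) - 1 < n (t i)" using J(1,2)[of "t i"] by simp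
            then have "dmax (\<xi> (t i) (Suc (J (t i) - 1))) (F (\<xi> (t i) (J (t i) - 1))) < dl (t i)"
              using po[of "t i"] unfolding ap_pseudoorbit_def by blast
            then show ?thesis unfolding Z_def JJ .
          qed
          moreover have "norm (\<xi> (t i) (J (t i)) - F (Z (t i))) \<le> c * dmax (\<xi> (t i) (J (t i))) (F (Z (t i)))"
            unfolding c_def by (rule norm_le_dmax)
          moreover have "c * dmax (\<xi> (t i) (J (t i))) (F (Z (t i))) \<le> c * dl (t i)"
            using c calculation(1) by (intro mult_left_mono) auto
          ultimately show "norm (\<xi> (t i) (J (t i)) - F (Z (t i))) \<le> c * dl (t i)"
            by linarith
        qed
        have yK: "y \<notin> K"
        proof
          assume "y \<in> K"
          obtain N where N: "\<And>i. i \<ge> N \<Longrightarrow> norm (\<xi> (t i) (J (t i)) - y) < \<theta>" using LIMSEQ_D[OF limJ] th by blast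
          have "dset (\<xi> (t N) (J (t N))) K \<le> dmax (\<xi> (t N) (J (t N))) y" by (rule dset_lower) fact
          also have "\<dots> \<le> norm (\<xi> (t N) (J (t N)) - y)" by (rule dmax_le_norm)
          finally show False using N[of N] J(3)[of "t N"] tK by simp
        qed
        have JN: "J (t i) < n (t i)" for i
        proof (rule ccontr)
          assume "\<not> J (t i) < n (t i)"
          then have "J (t i) = n (t i)" using J(2)[of "t i"] by simp
          then show False using J(3)[of "t i"] dn[of "t i"] dl[of "t i"] tK KK' by simp
        qed
        have A1: "ap_less M M0 F x0 y"
        proof (rule limit_chain[where \<xi>="\<lambda>i. \<xi> (t i)" and n="\<lambda>i. n (t i)" and \<delta>="\<lambda>i. dl (t i)"
              and a="\<lambda>i. 0" and b="\<lambda>i. J (t i)"])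
          show "continuous_on M F" by fact
          show "ap_pseudoorbit M M0 F (dl (t k)) (\<xi> (t k)) (n (t k))" for k by (rule po)
          show "(\<lambda>i. dl (t i)) \<longlonglongrightarrow> 0" by (rule Dlim)
          show "0 < J (t k)" for k using J(1)[of "t k"] by simp
          show "J (t k) \<le> n (t k)" for k using J(2)[of "t k"] by simp
          show "(\<lambda>i. \<xi> (t i) 0) \<longlonglongrightarrow> x0" by (rule lim0)
          show "(\<lambda>i. \<xi> (t i) (J (t i))) \<longlonglongrightarrow> y" by (rule limJ)
          show "x0 \<in> M" "y \<in> M" using x0M yM by auto
          show "\<xi> (t k) 0 \<in> M0" if "x0 \<in> M0" for k using that x0M0 by simp
          show "y \<in> M0" if "\<xi> (t k) (J (t k)) \<in> M0" for k using that nM0[of "J (t k)" "t k"] J(2)[of "t k"] by simp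
        qed
        have A2: "ap_less M M0 F y x0'"
        proof (rule limit_chain[where \<xi>="\<lambda>i. \<xi> (t i)" and n="\<lambda>i. n (t i)" and \<delta>="\<lambda>i. dl (t i)"
              and a="\<lambda>i. J (t i)" and b="\<lambda>i. n (t i)"])
          show "continuous_on M F" by fact
          show "ap_pseudoorbit M M0 F (dl (t k)) (\<xi> (t k)) (n (t k))" for k by (rule po)
          show "(\<lambda>i. dl (t i)) \<longlonglongrightarrow> 0" by (rule Dlim)
          show "J (t k) < n (t k)" for k using JN[of k] by simp
          show "n (t k) \<le> n (t k)" for k by simp
          show "(\<lambda>i. \<xi> (t i) (J (t i))) \<longlonglongrightarrow> y" by (rule limJ)
          show "(\<lambda>i. \<xi> (t i) (n (t i))) \<longlonglongrightarrow> x0'" by (rule limn)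
          show "y \<in> M" "x0' \<in> M" using x0M yM by auto
          show "\<xi> (t k) (J (t k)) \<in> M0" if "y \<in> M0" for k using that yM by simp
          show "x0' \<in> M0" if "\<xi> (t k) (n (t k)) \<in> M0" for k using that nM0[of "n (t k)" "t k"] by simp
        qed
        have "ap_less M M0 F x0' x0" using class_props(4)[OF KKprops(6)[OF KKK(1)]] x0 KK' by auto
        then have "ap_less M M0 F y x0" using A2 ap_less_trans by blast
        then have "y \<in> K" using class_props(5)[OF KKprops(6)[OF KKK(1)] x0(1) yM(1) A1] by blast
        then show False using yK by simp
      qed
      then show False using ng cl by simp
    qed
  qed
qed


theorem mainTheorem6:
  fixes M M0 M1 :: "(real^'n) set" and F :: "real^'n \<Rightarrow> real^'n"
  assumes "closed M"
    and "F ` M \<subseteq> M"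
    and "continuous_on M F"
    and "bounded (F ` M)"
    and "M = M0 \<union> M1" and "M0 \<inter> M1 = {}"
    and "closed M0"
    and "F ` M0 \<subseteq> M0" and "F ` M1 \<subseteq> M1"
    and "finite {K. ap_basic_class M M0 F K \<and> K \<subseteq> M1}"
    and "\<forall>K. ap_basic_class M M0 F K \<and> K \<subseteq> M1 \<longrightarrow> closed K"
  shows "(\<exists>\<theta>0>0. \<forall>\<theta>. 0 < \<theta> \<and> \<theta> < \<theta>0 \<longrightarrow>
            (\<exists>\<delta>. 0 < \<delta> \<and> \<delta> < \<theta> \<and>
              (\<forall>K K' \<xi> n.
                 ap_basic_class M M0 F K \<and> K \<subseteq> M1 \<and>
                 ap_basic_class M M0 F K' \<and> K' \<subseteq> M1 \<and>
                 ap_pseudoorbit M M0 F \<delta> \<xi> n \<and>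
                 dset (\<xi> 0) K < \<delta> \<and> dset (\<xi> n) K' < \<delta> \<and>
                 (\<exists>j\<in>{1..n}. dset (\<xi> j) K > \<theta>)
                 \<longrightarrow> K \<noteq> K' \<and> class_less M M0 F K K')))
       \<and> (\<forall>\<delta>'>0. \<exists>\<delta> n0. 0 < \<delta> \<and> \<delta> < \<delta>' \<and> 1 \<le> n0 \<and>
            (\<forall>\<xi> n. ap_pseudoorbit M M0 F \<delta> \<xi> n \<and> n > n0 \<longrightarrow>
               (\<exists>j\<le>n. \<xi> j \<in> nbhd M \<delta>' (R_ap M M0 F))))"
  proof (rule conjI)
  show "\<exists>\<theta>0>0. \<forall>\<theta>. 0 < \<theta> \<and> \<theta> < \<theta>0 \<longrightarrow>
            (\<exists>\<delta>. 0 < \<delta> \<and> \<delta> < \<theta> \<and>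
              (\<forall>K K' \<xi> n.
                 ap_basic_class M M0 F K \<and> K \<subseteq> M1 \<and>
                 ap_basic_class M M0 F K' \<and> K' \<subseteq> M1 \<and>
                 ap_pseudoorbit M M0 F \<delta> \<xi> n \<and>
                 dset (\<xi> 0) K < \<delta> \<and> dset (\<xi> n) K' < \<delta> \<and>
                 (\<exists>j\<in>{1..n}. dset (\<xi> j) K > \<theta>)
                 \<longrightarrow> K \<noteq> K' \<and> class_less M M0 F K K'))"
    by (rule part_a[OF assms(1-7) assms(9-11)])
  show "\<forall>\<delta>'>0. \<exists>\<delta> n0. 0 < \<delta> \<and> \<delta> < \<delta>' \<and> 1 \<le> n0 \<and>
            (\<forall>\<xi> n. ap_pseudoorbit M M0 F \<delta> \<xi> n \<and> n > n0 \<longrightarrow>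
               (\<exists>j\<le>n. \<xi> j \<in> nbhd M \<delta>' (R_ap M M0 F)))"
    by (rule part_b[OF assms(1-4) assms(7) assms(8)])
qed

end
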